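(* Let $G$ be a directed acyclic contractor network and let $d>0$ be the maximum number of edges in a directed path of $G$. For $S\subseteq\mathcal V$, $\mathbf y\in\{0,1\}^S$ and $\mathbf z\in\{0,1\}^{S'}$ with $S'\supseteq\bigcup_{i\in S}\delta_{\mathrm{in}}(i)$, put $$q_S(\mathbf y\mid\mathbf z)=\prod_{i\in S}p_i(\mathbf z)^{y_i}\big(1-p_i(\mathbf z)\big)^{1-y_i},\qquad p_i(\mathbf z)=(1-\alpha_i)r_i+\alpha_i\sum_{j\in\delta_{\mathrm{in}}(i)}w_{ij}z_j.$$ Then for every $t\ge d$ and every $\mathbf x\in\{0,1\}^n$, $\Pr(\mathbf X^t=\mathbf x)=\pi(\mathbf x)$, and $$\Pr(\mathbf X^t=\mathbf x)=\sum_{\mathbf z^1\in\{0,1\}^{\Delta^1}}\cdots\sum_{\mathbf z^d\in\{0,1\}^{\Delta^d}}q_{\mathcal V}(\mathbf x\mid\mathbf z^1)\prod_{k=1}^{d-1}q_{\Delta^k}(\mathbf z^k\mid\mathbf z^{k+1})\prod_{i\in\Delta^d}r_i^{z^d_i}(1-r_i)^{1-z^d_i},$$ where $\mathbf z^k$ plays the role of the state of the nodes of $\Delta^k$ at time $t-k$. (Here every node of $\Delta^d$ is a pure principal, and $\delta_{\mathrm{in}}(i)\subseteq\Delta^{k+1}$ for $i\in\Delta^k$, so all terms are well defined.)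
   Context: A contractor network is a finite directed graph $G=(\mathcal V,\mathcal E)$ with $n=|\mathcal V|$ nodes, without multiple edges, in which every node has at least one incident edge; here $G$ is assumed acyclic (no directed cycles and no self-loops). For $i\in\mathcal V$ let $\delta_{\mathrm{in}}(i)=\{j:(j,i)\in\mathcal E\}$ and $\delta_{\mathrm{out}}(i)=\{k:(i,k)\in\mathcal E\}$. A node $i$ is a pure principal if $\delta_{\mathrm{in}}(i)=\emptyset$, a pure obligee if $\delta_{\mathrm{out}}(i)=\emptyset$, and an intermediary otherwise. Each edge $(j,i)\in\mathcal E$ carries a weight $w_{ij}>0$; $w_{ij}=0$ if $(j,i)\notin\mathcal E$; for every $i$ with $\delta_{\mathrm{in}}(i)\neq\emptyset$, $\sum_{j\in\delta_{\mathrm{in}}(i)}w_{ij}=1$. Risk scores: $r_i\in(0,1)$ if $i$ is not a pure obligee, $r_i=0$ for pure obligees. Propagation parameters: $\alpha_i=0$ for pure principals, $\alpha_i=1$ for pure obligees, $\alpha_i\in(0,1)$ for intermediaries. Failure process $(\mathbf X^t)_{t\in\mathbb N}$ on $\{0,1\}^n$: independent $X_i^0\sim\mathrm{Bernoulli}(r_i)$; for $t\ge0$, conditionally on $(\mathbf X^0,\dots,\mathbf X^t)$ the $X_i^{t+1}$ are independent with $X_i^{t+1}\sim\mathrm{Bernoulli}\big((1-\alpha_i)r_i+\alpha_i\sum_{j\in\delta_{\mathrm{in}}(i)}w_{ij}X_j^t\big)$; $\pi(\mathbf x)=\lim_t\Pr(\mathbf X^t=\mathbf x)$ is its stationary distribution.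 In-neighbor layers: $\Delta^1=\bigcup_{i\in\mathcal V}\delta_{\mathrm{in}}(i)$ and, for $k>1$, $\Delta^k=\bigcup_{i\in\Delta^{k-1}}\delta_{\mathrm{in}}(i)$; equivalently $\Delta^k$ is the set of nodes from which some directed path with $k$ edges starts. *)

theory Defs
  imports "HOL-Analysis.Analysis" "HOL-Library.FuncSet"
begin

text \<open>Nodes are the elements of a finite type 'v (so n = CARD('v)); the edge set is
  E :: ('v \<times> 'v) set, (j,i) \<in> E meaning an edge from j to i. Weights: w i j is w_{ij}
  (weight of the edge (j,i)). States in {0,1}^S are functions 'v \<Rightarrow> bool, True = 1,
  that are False outside S.\<close>

definition din :: "('v \<times> 'v) set \<Rightarrow> 'v \<Rightarrow> 'v set" where
  "din E i = {j. (j, i) \<in> E}"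

definition dout :: "('v \<times> 'v) set \<Rightarrow> 'v \<Rightarrow> 'v set" where
  "dout E i = {k. (i, k) \<in> E}"

definition pure_principal :: "('v \<times> 'v) set \<Rightarrow> 'v \<Rightarrow> bool" where
  "pure_principal E i \<longleftrightarrow> din E i = {}"

definition pure_obligee :: "('v \<times> 'v) set \<Rightarrow> 'v \<Rightarrow> bool" where
  "pure_obligee E i \<longleftrightarrow> dout E i = {}"

definition intermediary :: "('v \<times> 'v) set \<Rightarrow> 'v \<Rightarrow> bool" where
  "intermediary E i \<longleftrightarrow> \<not> pure_principal E i \<and> \<not> pure_obligee E i"

definition contractor_network ::
  "('v::finite \<times> 'v) set \<Rightarrow> ('v \<Rightarrow> 'v \<Rightarrow> real) \<Rightarrow> ('v \<Rightarrow> real) \<Rightarrow> ('v \<Rightarrow> real) \<Rightarrow> bool" where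
  "contractor_network E w r \<alpha> \<longleftrightarrow>
     (\<forall>i. din E i \<union> dout E i \<noteq> {}) \<and>
     acyclic E \<and>
     (\<forall>i j. (j, i) \<in> E \<longrightarrow> w i j > 0) \<and>
     (\<forall>i j. (j, i) \<notin> E \<longrightarrow> w i j = 0) \<and>
     (\<forall>i. din E i \<noteq> {} \<longrightarrow> (\<Sum>j\<in>din E i. w i j) = 1) \<and>
     (\<forall>i. \<not> pure_obligee E i \<longrightarrow> 0 < r i \<and> r i < 1) \<and>
     (\<forall>i. pure_obligee E i \<longrightarrow> r i = 0) \<and>
     (\<forall>i. pure_principal E i \<longrightarrow> \<alpha> i = 0) \<and>
     (\<forall>i. pure_obligee E i \<longrightarrow> \<alpha> i = 1) \<and>
     (\<forall>i. intermediary E i \<longrightarrow> 0 < \<alpha> i \<and> \<alpha> i < 1)"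

definition pfail :: "('v::finite \<times> 'v) set \<Rightarrow> ('v \<Rightarrow> 'v \<Rightarrow> real) \<Rightarrow> ('v \<Rightarrow> real) \<Rightarrow> ('v \<Rightarrow> real)
    \<Rightarrow> ('v \<Rightarrow> bool) \<Rightarrow> 'v \<Rightarrow> real" where
  "pfail E w r \<alpha> z i = (1 - \<alpha> i) * r i + \<alpha> i * (\<Sum>j\<in>din E i. w i j * of_bool (z j))"

definition qcond :: "('v::finite \<times> 'v) set \<Rightarrow> ('v \<Rightarrow> 'v \<Rightarrow> real) \<Rightarrow> ('v \<Rightarrow> real) \<Rightarrow> ('v \<Rightarrow> real)
    \<Rightarrow> 'v set \<Rightarrow> ('v \<Rightarrow> bool) \<Rightarrow> ('v \<Rightarrow> bool) \<Rightarrow> real" where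
  "qcond E w r \<alpha> S y z =
     (\<Prod>i\<in>S. pfail E w r \<alpha> z i ^ (of_bool (y i) :: nat) * (1 - pfail E w r \<alpha> z i) ^ (1 - of_bool (y i)))"

definition cfgs :: "'v set \<Rightarrow> ('v \<Rightarrow> bool) set" where
  "cfgs S = {z. \<forall>i. i \<notin> S \<longrightarrow> z i = False}"

text \<open>Law of the failure process: Pr(X^t = x). X^0 has independent Bernoulli(r_i)
  coordinates, and X^{t+1} given the past has independent Bernoulli(p_i(X^t)) coordinates.\<close>
fun prob_state :: "('v::finite \<times> 'v) set \<Rightarrow> ('v \<Rightarrow> 'v \<Rightarrow> real) \<Rightarrow> ('v \<Rightarrow> real) \<Rightarrow> ('v \<Rightarrow> real)
    \<Rightarrow> nat \<Rightarrow> ('v \<Rightarrow> bool) \<Rightarrow> real" where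
  "prob_state E w r \<alpha> 0 x =
     (\<Prod>i\<in>UNIV. r i ^ (of_bool (x i) :: nat) * (1 - r i) ^ (1 - of_bool (x i)))"
| "prob_state E w r \<alpha> (Suc t) x =
     (\<Sum>y\<in>UNIV. prob_state E w r \<alpha> t y * qcond E w r \<alpha> UNIV x y)"

definition stationary :: "('v::finite \<times> 'v) set \<Rightarrow> ('v \<Rightarrow> 'v \<Rightarrow> real) \<Rightarrow> ('v \<Rightarrow> real) \<Rightarrow> ('v \<Rightarrow> real)
    \<Rightarrow> ('v \<Rightarrow> bool) \<Rightarrow> real" where
  "stationary E w r \<alpha> x = lim (\<lambda>t. prob_state E w r \<alpha> t x)"

text \<open>In-neighbour layers: Delta 1 = union of all din i, Delta (k+1) = union of din i over Delta k.
  (Delta 0 = V is only an auxiliary base case.)\<close>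
fun Delta :: "('v \<times> 'v) set \<Rightarrow> nat \<Rightarrow> 'v set" where
  "Delta E 0 = UNIV"
| "Delta E (Suc k) = (\<Union>i\<in>Delta E k. din E i)"

definition has_path_len :: "('v \<times> 'v) set \<Rightarrow> nat \<Rightarrow> bool" where
  "has_path_len E k \<longleftrightarrow> (\<exists>xs. length xs = Suc k \<and> (\<forall>m<k. (xs ! m, xs ! Suc m) \<in> E))"

definition max_path_edges :: "('v \<times> 'v) set \<Rightarrow> nat" where
  "max_path_edges E = Max {k. has_path_len E k}"

end

theory Submission imports Defs begin

definition marg where
  "marg E w r \<alpha> s S z = (\<Sum>y | \<forall>i\<in>S. y i = z i. prob_state E w r \<alpha> s y)"

lemma sumprod:
  fixes h :: "'v::finite \<Rightarrow> bool \<Rightarrow> real"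
  assumes "\<And>i. h i True + h i False = 1"
  shows "(\<Sum>y | \<forall>i\<in>S. y i = z i. \<Prod>i\<in>UNIV. h i (y i)) = (\<Prod>i\<in>S. h i (z i))"
proof -
  have set: "{y. \<forall>i\<in>S. y i = z i} = PiE UNIV (\<lambda>i. if i\<in>S then {z i} else UNIV)"
    by (auto simp: PiE_iff split: if_splits; metis)
  have "(\<Sum>y | \<forall>i\<in>S. y i = z i. \<Prod>i\<in>UNIV. h i (y i))
      = (\<Prod>i\<in>UNIV. \<Sum>b\<in>(if i\<in>S then {z i} else UNIV). h i b)"
    unfolding set by (rule prod_sum_PiE[symmetric]) auto
  also have "\<dots> = (\<Prod>i\<in>UNIV. if i\<in>S then h i (z i) else 1)"
    using assms by (intro prod.cong) (auto simp: UNIV_bool add.commute)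
  also have "\<dots> = (\<Prod>i\<in>S. h i (z i))"
    by (simp add: prod.If_cases)
  finally show ?thesis .
qed

lemma qcond_marg:
  "(\<Sum>y | \<forall>i\<in>S. y i = z i. qcond E w r \<alpha> UNIV y u) = qcond E w r \<alpha> S z u"
  unfolding qcond_def
  by (rule sumprod[where h = "\<lambda>i b. pfail E w r \<alpha> u i ^ (of_bool b :: nat) * (1 - pfail E w r \<alpha> u i) ^ (1 - of_bool b)"]) simp

lemma qcond_cong:
  assumes "\<forall>i\<in>S. \<forall>j\<in>din E i. u j = u' j"
  shows "qcond E w r \<alpha> S z u = qcond E w r \<alpha> S z u'"
proof -
  have "\<And>i. i \<in> S \<Longrightarrow> pfail E w r \<alpha> u i = pfail E w r \<alpha> u' i"
    using assms unfolding pfail_def by (auto intro!: sum.cong)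
  then show ?thesis unfolding qcond_def by (intro prod.cong) auto
qed

lemma step:
  assumes T: "\<forall>i\<in>S. din E i \<subseteq> T"
  shows "marg E w r \<alpha> (Suc s) S z = (\<Sum>z'\<in>cfgs T. marg E w r \<alpha> s T z' * qcond E w r \<alpha> S z z')"
proof -
  define P where "P = prob_state E w r \<alpha> s"
  define res where "res = (\<lambda>u::'a\<Rightarrow>bool. \<lambda>j. if j \<in> T then u j else False)"
  have "marg E w r \<alpha> (Suc s) S z = (\<Sum>y | \<forall>i\<in>S. y i = z i. \<Sum>u\<in>UNIV. P u * qcond E w r \<alpha> UNIV y u)"
    by (simp add: marg_def P_def)
  also have "\<dots> = (\<Sum>u\<in>UNIV. \<Sum>y | \<forall>i\<in>S. y i = z i. P u * qcond E w r \<alpha> UNIV y u)"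
    by (rule sum.swap)
  also have "\<dots> = (\<Sum>u\<in>UNIV. P u * qcond E w r \<alpha> S z u)"
    by (simp add: sum_distrib_left[symmetric] qcond_marg)
  also have "\<dots> = (\<Sum>u\<in>UNIV. P u * qcond E w r \<alpha> S z (res u))"
    using T by (intro sum.cong refl arg_cong2[where f="(*)"] qcond_cong) (auto simp: res_def)
  also have "\<dots> = (\<Sum>z'\<in>cfgs T. \<Sum>u | u \<in> UNIV \<and> res u = z'. P u * qcond E w r \<alpha> S z (res u))"
    by (rule sum.group[symmetric]) (auto simp: cfgs_def res_def)
  also have "\<dots> = (\<Sum>z'\<in>cfgs T. \<Sum>u | \<forall>i\<in>T. u i = z' i. P u * qcond E w r \<alpha> S z z')"
  proof (rule sum.cong[OF refl])
    fix z' assume "z' \<in> cfgs T"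
    then have eq: "{u. u \<in> UNIV \<and> res u = z'} = {u. \<forall>i\<in>T. u i = z' i}"
      by (auto simp: cfgs_def res_def fun_eq_iff)
    show "(\<Sum>u | u \<in> UNIV \<and> res u = z'. P u * qcond E w r \<alpha> S z (res u))
       = (\<Sum>u | \<forall>i\<in>T. u i = z' i. P u * qcond E w r \<alpha> S z z')"
    proof (rule sum.cong[OF eq])
      fix u assume "u \<in> {u. \<forall>i\<in>T. u i = z' i}"
      with \<open>z' \<in> cfgs T\<close> have "res u = z'" by (auto simp: cfgs_def res_def fun_eq_iff)
      then show "P u * qcond E w r \<alpha> S z (res u) = P u * qcond E w r \<alpha> S z z'" by simp
    qed
  qed
  also have "\<dots> = (\<Sum>z'\<in>cfgs T. marg E w r \<alpha> s T z' * qcond E w r \<alpha> S z z')"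
    by (simp add: marg_def P_def sum_distrib_right)
  finally show ?thesis .
qed


lemma Delta_path:
  "j \<in> Delta E k \<Longrightarrow> \<exists>xs. length xs = Suc k \<and> xs!0 = j \<and> (\<forall>m<k. (xs!m, xs!Suc m) \<in> E)"
proof (induction k arbitrary: j)
  case 0
  then show ?case by (intro exI[of _ "[j]"]) auto
next
  case (Suc k)
  then obtain i where i: "i \<in> Delta E k" "(j, i) \<in> E" by (auto simp: din_def)
  from Suc.IH[OF i(1)] obtain xs where xs: "length xs = Suc k" "xs!0 = i" "\<forall>m<k. (xs!m, xs!Suc m) \<in> E"
    by blast
  show ?case
  proof (intro exI[of _ "j # xs"] conjI allI impI)
    fix m assume "m < Suc k"
    then show "((j # xs) ! m, (j # xs) ! Suc m) \<in> E"
      using xs i by (cases m) auto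
  qed (use xs in auto)
qed

lemma path_trancl:
  assumes "\<forall>m<k. (xs!m, xs!Suc m) \<in> E"
  shows "a < b \<Longrightarrow> b \<le> k \<Longrightarrow> (xs!a, xs!b) \<in> E\<^sup>+"
proof (induction b)
  case 0 then show ?case by simp
next
  case (Suc b)
  show ?case
  proof (cases "a = b")
    case True then show ?thesis using assms Suc.prems by auto
  next
    case False
    then have "(xs!a, xs!b) \<in> E\<^sup>+" using Suc by auto
    moreover have "(xs!b, xs!Suc b) \<in> E" using assms Suc.prems by auto
    ultimately show ?thesis by (rule trancl_into_trancl)
  qed
qed

lemma path_bound:
  fixes E :: "('v::finite \<times> 'v) set"
  assumes "acyclic E" "has_path_len E k"
  shows "k < CARD('v)"
proof -
  obtain xs where xs: "length xs = Suc k" "\<forall>m<k. (xs!m, xs!Suc m) \<in> E"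
    using assms(2) unfolding has_path_len_def by blast
  have "distinct xs"
  proof (rule ccontr)
    assume "\<not> distinct xs"
    then obtain a b where ab: "a < length xs" "b < length xs" "a \<noteq> b" "xs!a = xs!b"
      by (auto simp: distinct_conv_nth)
    have "\<exists>a b. a < b \<and> b \<le> k \<and> xs!a = xs!b"
    proof (cases "a < b")
      case True then show ?thesis using ab xs by (intro exI[of _ a] exI[of _ b]) auto
    next
      case False then show ?thesis using ab xs by (intro exI[of _ b] exI[of _ a]) auto
    qed
    then obtain a b where "a < b" "b \<le> k" "xs!a = xs!b" by blast
    with path_trancl[OF xs(2)] have "(xs!a, xs!a) \<in> E\<^sup>+" by metis
    with assms(1) show False by (auto simp: acyclic_def)
  qed
  then have "Suc k = card (set xs)" using xs by (simp add: distinct_card)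
  also have "\<dots> \<le> CARD('v)" by (rule card_mono) auto
  finally show ?thesis by simp
qed

lemma Delta_top:
  fixes E :: "('v::finite \<times> 'v) set"
  assumes "acyclic E" "i \<in> Delta E (max_path_edges E)"
  shows "din E i = {}"
proof (rule ccontr)
  assume "din E i \<noteq> {}"
  then obtain j where "j \<in> din E i" by blast
  with assms(2) have "j \<in> Delta E (Suc (max_path_edges E))" by auto
  from Delta_path[OF this] have "has_path_len E (Suc (max_path_edges E))"
    unfolding has_path_len_def by blast
  moreover have "finite {k. has_path_len E k}"
    by (rule finite_subset[of _ "{..<CARD('v)}"]) (auto dest: path_bound[OF assms(1)])
  ultimately have "Suc (max_path_edges E) \<le> max_path_edges E"
    unfolding max_path_edges_def by (intro Max_ge) auto
  then show False by simp
qed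


definition base :: "('v \<Rightarrow> real) \<Rightarrow> 'v set \<Rightarrow> ('v \<Rightarrow> bool) \<Rightarrow> real" where
  "base r S z = (\<Prod>i\<in>S. r i ^ (of_bool (z i) :: nat) * (1 - r i) ^ (1 - of_bool (z i)))"

lemma marg_0:
  "marg E w r \<alpha> 0 S z = base r S z"
  unfolding marg_def base_def prob_state.simps
  by (rule sumprod[where h = "\<lambda>i b. r i ^ (of_bool b :: nat) * (1 - r i) ^ (1 - of_bool b)"]) simp

lemma cfgs_empty: "cfgs {} = {\<lambda>_. False}"
  by (auto simp: cfgs_def)

lemma marg_total: "marg E w r \<alpha> s {} z = 1"
proof (induction s arbitrary: z)
  case 0 then show ?case by (simp add: marg_0 base_def)
next
  case (Suc s)
  then show ?case by (subst step[where T="{}"]) (auto simp: cfgs_empty qcond_def)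
qed

lemma marg_top:
  fixes E :: "('v::finite \<times> 'v) set"
  assumes cn: "contractor_network E w r \<alpha>" and d: "d = max_path_edges E"
  shows "marg E w r \<alpha> s (Delta E d) z = base r (Delta E d) z"
proof (cases s)
  case 0 then show ?thesis by (simp add: marg_0)
next
  case (Suc s')
  have top: "\<And>i. i \<in> Delta E d \<Longrightarrow> din E i = {}"
    using Delta_top cn d unfolding contractor_network_def by blast
  have "\<And>i u. i \<in> Delta E d \<Longrightarrow> pfail E w r \<alpha> u i = r i"
  proof -
    fix i u assume "i \<in> Delta E d"
    then have "din E i = {}" by (rule top)
    moreover then have "\<alpha> i = 0" using cn by (auto simp: contractor_network_def pure_principal_def)
    ultimately show "pfail E w r \<alpha> u i = r i" by (simp add: pfail_def)
  qed
  then have "qcond E w r \<alpha> (Delta E d) z u = base r (Delta E d) z" for u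
    unfolding qcond_def base_def by (intro prod.cong) auto
  then show ?thesis unfolding Suc
    by (subst step[where T="{}"]) (auto simp: cfgs_empty marg_total top)
qed

lemma sum_PiE_insert:
  assumes "a \<notin> A"
  shows "(\<Sum>Z\<in>PiE (insert a A) F. g Z) = (\<Sum>y\<in>F a. \<Sum>Z\<in>PiE A F. g (Z(a:=y)))"
proof -
  have "(\<Sum>Z\<in>PiE (insert a A) F. g Z) = (\<Sum>p\<in>F a \<times> PiE A F. g ((\<lambda>(y, h). h(a := y)) p))"
    unfolding PiE_insert_eq by (subst sum.reindex[OF inj_combinator[OF assms]]) (simp add: comp_def)
  also have "\<dots> = (\<Sum>y\<in>F a. \<Sum>Z\<in>PiE A F. g (Z(a:=y)))"
    by (simp add: sum.cartesian_product split_def)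
  finally show ?thesis .
qed


lemma layers:
  fixes E :: "('v::finite \<times> 'v) set"
  assumes cn: "contractor_network E w r \<alpha>" and d: "d = max_path_edges E"
    and td: "d \<le> t" and kd: "k < d"
  shows "marg E w r \<alpha> (t - k) (Delta E k) z =
    (\<Sum>Z\<in>PiE {Suc k..d} (\<lambda>k. cfgs (Delta E k)).
        qcond E w r \<alpha> (Delta E k) z (Z (Suc k))
      * (\<Prod>j\<in>{Suc k..<d}. qcond E w r \<alpha> (Delta E j) (Z j) (Z (Suc j)))
      * base r (Delta E d) (Z d))"
proof -
  have kd': "k \<le> d - 1" using kd by simp
  have stepk: "marg E w r \<alpha> (t - k) (Delta E k) z =
      (\<Sum>z'\<in>cfgs (Delta E (Suc k)). marg E w r \<alpha> (t - Suc k) (Delta E (Suc k)) z' * qcond E w r \<alpha> (Delta E k) z z')"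
    if "k < d" for k z
  proof -
    have "t - k = Suc (t - Suc k)" using that td by simp
    then show ?thesis by (simp only:) (rule step, auto)
  qed
  show ?thesis using kd' kd
  proof (induction k arbitrary: z rule: inc_induct)
    case base
    have dd: "Suc (d - 1) = d" using kd by simp
    have "{Suc (d - 1)..d} = insert d {}" using dd by auto
    have "marg E w r \<alpha> (t - (d - 1)) (Delta E (d - 1)) z =
      (\<Sum>z'\<in>cfgs (Delta E d). marg E w r \<alpha> (t - d) (Delta E d) z' * qcond E w r \<alpha> (Delta E (d - 1)) z z')"
      using stepk[of "d - 1" z] kd by (simp only: dd)
    then show ?case using kd \<open>{Suc (d - 1)..d} = insert d {}\<close>
      by (simp add: sum_PiE_insert dd marg_top[OF cn d] mult.commute)
  next
    case (step k)
    have skd: "Suc k < d" using step.hyps by simp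
    have I1: "{Suc k..d} = insert (Suc k) {Suc (Suc k)..d}" using skd by auto
    have I2: "{Suc k..<d} = insert (Suc k) {Suc (Suc k)..<d}" using skd by auto
    have "marg E w r \<alpha> (t - k) (Delta E k) z =
      (\<Sum>z'\<in>cfgs (Delta E (Suc k)). (\<Sum>Z\<in>PiE {Suc (Suc k)..d} (\<lambda>k. cfgs (Delta E k)).
        qcond E w r \<alpha> (Delta E (Suc k)) z' (Z (Suc (Suc k)))
      * (\<Prod>j\<in>{Suc (Suc k)..<d}. qcond E w r \<alpha> (Delta E j) (Z j) (Z (Suc j)))
      * base r (Delta E d) (Z d)) * qcond E w r \<alpha> (Delta E k) z z')"
      using step.IH[OF skd] stepk[of k z] skd by simp
    also have "\<dots> = (\<Sum>z'\<in>cfgs (Delta E (Suc k)). \<Sum>Z\<in>PiE {Suc (Suc k)..d} (\<lambda>k. cfgs (Delta E k)).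
        qcond E w r \<alpha> (Delta E k) z ((Z(Suc k := z')) (Suc k))
      * (\<Prod>j\<in>{Suc k..<d}. qcond E w r \<alpha> (Delta E j) ((Z(Suc k := z')) j) ((Z(Suc k := z')) (Suc j)))
      * base r (Delta E d) ((Z(Suc k := z')) d))"
    proof (intro sum.cong refl)
      fix z' assume "z' \<in> cfgs (Delta E (Suc k))"
      have p: "(\<Prod>j\<in>{Suc k..<d}. qcond E w r \<alpha> (Delta E j) ((Z(Suc k := z')) j) ((Z(Suc k := z')) (Suc j)))
         = qcond E w r \<alpha> (Delta E (Suc k)) z' (Z (Suc (Suc k)))
         * (\<Prod>j\<in>{Suc (Suc k)..<d}. qcond E w r \<alpha> (Delta E j) (Z j) (Z (Suc j)))" for Z
        unfolding I2 by (subst prod.insert) (auto intro!: prod.cong)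
      show "(\<Sum>Z\<in>PiE {Suc (Suc k)..d} (\<lambda>k. cfgs (Delta E k)).
        qcond E w r \<alpha> (Delta E (Suc k)) z' (Z (Suc (Suc k)))
      * (\<Prod>j\<in>{Suc (Suc k)..<d}. qcond E w r \<alpha> (Delta E j) (Z j) (Z (Suc j)))
      * base r (Delta E d) (Z d)) * qcond E w r \<alpha> (Delta E k) z z' =
       (\<Sum>Z\<in>PiE {Suc (Suc k)..d} (\<lambda>k. cfgs (Delta E k)).
        qcond E w r \<alpha> (Delta E k) z ((Z(Suc k := z')) (Suc k))
      * (\<Prod>j\<in>{Suc k..<d}. qcond E w r \<alpha> (Delta E j) ((Z(Suc k := z')) j) ((Z(Suc k := z')) (Suc j)))
      * base r (Delta E d) ((Z(Suc k := z')) d))"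
        unfolding p using skd by (simp add: sum_distrib_left sum_distrib_right mult_ac)
    qed
    also have "\<dots> = (\<Sum>Z\<in>PiE {Suc k..d} (\<lambda>k. cfgs (Delta E k)).
        qcond E w r \<alpha> (Delta E k) z (Z (Suc k))
      * (\<Prod>j\<in>{Suc k..<d}. qcond E w r \<alpha> (Delta E j) (Z j) (Z (Suc j)))
      * base r (Delta E d) (Z d))"
      unfolding I1 by (rule sum_PiE_insert[symmetric]) simp
    finally show ?case .
  qed
qed


lemma marg_UNIV: "marg E w r \<alpha> s UNIV x = prob_state E w r \<alpha> s x"
proof -
  have "{y. \<forall>i\<in>UNIV. y i = x i} = {x}" by (auto simp: fun_eq_iff)
  then show ?thesis by (simp add: marg_def)
qed

theorem mainTheorem12:
  fixes E :: "('v::finite \<times> 'v) set" and w :: "'v \<Rightarrow> 'v \<Rightarrow> real"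
    and r \<alpha> :: "'v \<Rightarrow> real" and d t :: nat and x :: "'v \<Rightarrow> bool"
  assumes "contractor_network E w r \<alpha>"
    and "d = max_path_edges E" and "d > 0" and "t \<ge> d"
  shows "convergent (\<lambda>s. prob_state E w r \<alpha> s x)
    \<and> prob_state E w r \<alpha> t x = stationary E w r \<alpha> x
    \<and> prob_state E w r \<alpha> t x =
      (\<Sum>Z\<in>PiE {1..d} (\<lambda>k. cfgs (Delta E k)).
          qcond E w r \<alpha> UNIV x (Z 1)
        * (\<Prod>k\<in>{1..<d}. qcond E w r \<alpha> (Delta E k) (Z k) (Z (Suc k)))
        * (\<Prod>i\<in>Delta E d. r i ^ (of_bool (Z d i) :: nat) * (1 - r i) ^ (1 - of_bool (Z d i))))"
proof -
  define C where "C = (\<Sum>Z\<in>PiE {1..d} (\<lambda>k. cfgs (Delta E k)).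
          qcond E w r \<alpha> UNIV x (Z 1)
        * (\<Prod>k\<in>{1..<d}. qcond E w r \<alpha> (Delta E k) (Z k) (Z (Suc k)))
        * (\<Prod>i\<in>Delta E d. r i ^ (of_bool (Z d i) :: nat) * (1 - r i) ^ (1 - of_bool (Z d i))))"
  have all: "prob_state E w r \<alpha> s x = C" if "s \<ge> d" for s
    using layers[OF assms(1,2) that assms(3), of x]
    by (simp add: marg_UNIV C_def base_def)
  have lim: "(\<lambda>s. prob_state E w r \<alpha> s x) \<longlonglongrightarrow> C"
    by (rule tendsto_eventually) (use all in \<open>auto simp: eventually_sequentially\<close>)
  then have "stationary E w r \<alpha> x = C"
    unfolding stationary_def by (rule limI)
  with lim all[OF assms(4)] show ?thesis
    by (auto simp: convergent_def C_def)
qed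

end
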